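(* Let $a>1$, $C_j(n,a)=\binom{n}{j}\left(\frac{1+a}{2}\right)^{n-j}\left(\frac{1-a}{2}\right)^j$ and $b_j=-\frac{i}{\sqrt2}(1-\frac{2j}{n})$. Then for every $g\in\mathtt{F}(\mathbb{C})$ there exists a unique $f\in\mathtt{F}(\mathbb{C})$ such that for every $z\in\mathbb{C}$, $$g(z)=\lim_{n\to\infty}\sum_{j=0}^nC_j(n,a)\mathcal{W}_{b_j}[f](z).$$
   Context: $\mathtt{F}(\mathbb{C})$ is the Fock space of entire functions $f$ with $\frac1\pi\int_{\mathbb{C}}|f(z)|^2e^{-|z|^2}d\lambda(z)<\infty$. For $c\in\mathbb{C}$ the Weyl operator is $\mathcal{W}_cf(z)=f(z-c)e^{z\bar c-|c|^2/2}$. *)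

theory Defs
  imports "HOL-Analysis.Analysis"
begin

text \<open>Fock space: entire functions with finite Gaussian-weighted L2 norm
  (the factor 1/pi does not affect finiteness).\<close>
definition fock :: "(complex \<Rightarrow> complex) \<Rightarrow> bool" where
  "fock f \<longleftrightarrow> f holomorphic_on UNIV \<and>
     integrable lborel (\<lambda>z::complex. (cmod (f z))\<^sup>2 * exp (- (cmod z)\<^sup>2))"

definition weyl :: "complex \<Rightarrow> (complex \<Rightarrow> complex) \<Rightarrow> complex \<Rightarrow> complex" where
  "weyl c f z = f (z - c) * exp (z * cnj c - complex_of_real ((cmod c)\<^sup>2 / 2))"

definition Ccoef :: "nat \<Rightarrow> nat \<Rightarrow> real \<Rightarrow> real" where
  "Ccoef j n a = real (n choose j) * ((1 + a) / 2) ^ (n - j) * ((1 - a) / 2) ^ j"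

definition bcoef :: "nat \<Rightarrow> nat \<Rightarrow> complex" where
  "bcoef n j = - (\<i> / complex_of_real (sqrt 2)) * (1 - 2 * of_nat j / of_nat n)"

end

theory Submission
  imports Defs "HOL-Computational_Algebra.Formal_Power_Series" "HOL-Real_Asymp.Real_Asymp"
    "HOL-Analysis.Gamma_Function" "HOL-Complex_Analysis.Cauchy_Integral_Formula"
begin

no_notation vec_nth (infixl "$" 90)
notation fps_nth (infixl "$" 75)



lemma fps_power_abs_bound:
  fixes X Y :: "real fps"
  assumes "\<And>i. \<bar>X $ i\<bar> \<le> Y $ i"
  shows "\<bar>(X ^ n) $ k\<bar> \<le> (Y ^ n) $ k"
proof (induction n arbitrary: k)
  case 0
  then show ?case by (simp add: fps_one_nth)
next
  case (Suc n)
  have "\<bar>(X ^ Suc n) $ k\<bar> = \<bar>\<Sum>i=0..k. X $ i * (X ^ n) $ (k - i)\<bar>"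
    by (simp add: fps_mult_nth)
  also have "\<dots> \<le> (\<Sum>i=0..k. \<bar>X $ i\<bar> * \<bar>(X ^ n) $ (k - i)\<bar>)"
    by (rule order_trans[OF sum_abs]) (simp add: abs_mult)
  also have "\<dots> \<le> (\<Sum>i=0..k. Y $ i * (Y ^ n) $ (k - i))"
    by (intro sum_mono mult_mono assms Suc.IH) (auto intro: order_trans[OF abs_ge_zero assms])
  also have "\<dots> = (Y ^ Suc n) $ k" by (simp add: fps_mult_nth)
  finally show ?case .
qed

definition Afps :: "real \<Rightarrow> real fps" where
  "Afps a = fps_const ((1 + a) / 2) * fps_exp 1 + fps_const ((1 - a) / 2) * fps_exp (-1)"

lemma Afps_nth: "Afps a $ i = ((1 + a) / 2 + (1 - a) / 2 * (-1) ^ i) / fact i"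
  by (simp add: Afps_def add_divide_distrib)

lemma Afps_abs: assumes "a \<ge> 1" shows "\<bar>Afps a $ i\<bar> \<le> fps_exp a $ i"
proof -
  have "\<bar>(1 + a) / 2 + (1 - a) / 2 * (-1) ^ i\<bar> \<le> a ^ i"
  proof (cases "even i")
    case True
    have "(1 + a) / 2 + (1 - a) / 2 = 1" by (simp add: field_simps)
    then show ?thesis using True assms by (simp add: one_le_power)
  next
    case False
    then have "i \<ge> 1" by (cases i) auto
    then have "a ^ 1 \<le> a ^ i" using assms by (intro power_increasing) auto
    moreover have "(1 + a) / 2 - (1 - a) / 2 = a" by (simp add: field_simps)
    ultimately show ?thesis using False assms by simp
  qed
  then show ?thesis by (simp add: Afps_nth abs_divide divide_right_mono)
qed

lemma Afps_power_bound: assumes "a \<ge> 1"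
  shows "\<bar>(Afps a ^ n) $ k\<bar> \<le> (real n * a) ^ k / fact k"
proof -
  have "\<bar>(Afps a ^ n) $ k\<bar> \<le> (fps_exp a ^ n) $ k"
    by (rule fps_power_abs_bound) (rule Afps_abs[OF assms])
  also have "\<dots> = (real n * a) ^ k / fact k" by (simp add: fps_exp_power_mult)
  finally show ?thesis .
qed

lemma Afps_power_nth:
  "(Afps a ^ n) $ k = (\<Sum>j\<le>n. Ccoef j n a * (real n - 2 * real j) ^ k) / fact k"
proof -
  let ?p = "(1 + a) / 2" and ?q = "(1 - a) / 2"
  have "Afps a ^ n = (fps_const ?q * fps_exp (-1) + fps_const ?p * fps_exp 1) ^ n"
    by (simp add: Afps_def add.commute)
  also have "\<dots> = (\<Sum>j\<le>n. of_nat (n choose j) * (fps_const ?q * fps_exp (-1)) ^ j * (fps_const ?p * fps_exp 1) ^ (n - j))"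
    by (rule binomial_ring)
  also have "\<dots> = (\<Sum>j\<le>n. fps_const (Ccoef j n a) * fps_exp (real n - 2 * real j))"
  proof (rule sum.cong[OF refl])
    fix j assume "j \<in> {..n}"
    then have jn: "j \<le> n" by simp
    have "fps_exp (-1) ^ j * fps_exp (1::real) ^ (n - j) = fps_exp (real n - 2 * real j)"
      using jn by (simp add: fps_exp_power_mult fps_exp_add_mult[symmetric] of_nat_diff)
    then show "of_nat (n choose j) * (fps_const ?q * fps_exp (-1)) ^ j * (fps_const ?p * fps_exp 1) ^ (n - j)
      = fps_const (Ccoef j n a) * fps_exp (real n - 2 * real j)"
      by (simp add: Ccoef_def power_mult_distrib fps_const_power fps_of_nat[symmetric] mult_ac
             flip: fps_const_mult)
  qed
  finally show ?thesis by (simp add: fps_sum_nth sum_divide_distrib)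
qed



lemma binom_lim_less:
  assumes "r < k"
  shows "(\<lambda>n. real (n choose r) / real n ^ k) \<longlonglongrightarrow> 0"
proof (rule tendsto_sandwich[of "\<lambda>_. 0" _ _ "\<lambda>n. 1 / real n"])
  show "\<forall>\<^sub>F n in sequentially. 0 \<le> real (n choose r) / real n ^ k" by simp
  show "\<forall>\<^sub>F n in sequentially. real (n choose r) / real n ^ k \<le> 1 / real n"
    using eventually_ge_at_top[of 1]
  proof eventually_elim
    case (elim n)
    have "real (n choose r) \<le> real n ^ r"
    proof (cases "r \<le> n")
      case True then show ?thesis using binomial_le_pow[OF True] by (metis of_nat_le_iff of_nat_power)
    next
      case False then show ?thesis by (simp add: binomial_eq_0)
    qed
    also have "real n ^ r \<le> real n ^ (k - 1)"
      using elim assms by (intro power_increasing) auto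
    finally have "real (n choose r) \<le> real n ^ (k - 1)" .
    moreover have "real n ^ k = real n ^ (k - 1) * real n"
      using assms by (metis Suc_diff_1 gr_implies_not0 neq0_conv power_Suc2)
    ultimately show ?case using elim
      by (simp add: divide_simps)
  qed
qed (auto intro: lim_1_over_n)

lemma binom_lim_eq:
  "(\<lambda>n. real (n choose k) / real n ^ k) \<longlonglongrightarrow> 1 / fact k"
proof -
  have a: "(\<lambda>n. real ((k + n) choose n) / real (n ^ k)) \<longlonglongrightarrow> 1 / fact k"
    by (rule fact_binomial_limit)
  have b: "(\<lambda>n. (real n / (real n + real k)) ^ k) \<longlonglongrightarrow> 1 ^ k"
  proof (rule tendsto_power)
    show "(\<lambda>n. real n / (real n + real k)) \<longlonglongrightarrow> 1" by real_asymp
  qed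
  have "(\<lambda>n. real ((k + n) choose n) / real (n ^ k) * (real n / (real n + real k)) ^ k) \<longlonglongrightarrow> 1 / fact k * 1 ^ k"
    by (rule tendsto_mult[OF a b])
  then have c0: "(\<lambda>n. real ((k + n) choose n) / real (n ^ k) * (real n / (real n + real k)) ^ k) \<longlonglongrightarrow> 1 / fact k"
    by simp
  have c: "(\<lambda>n. real ((n + k) choose k) / real (n + k) ^ k) \<longlonglongrightarrow> 1 / fact k"
  proof (rule Lim_transform_eventually[OF c0])
    show "\<forall>\<^sub>F n in sequentially. real ((k + n) choose n) / real (n ^ k) * (real n / (real n + real k)) ^ k = real ((n + k) choose k) / real (n + k) ^ k"
      using eventually_ge_at_top[of 1]
    proof eventually_elim
      case (elim n)
      have "(k + n) choose n = (n + k) choose k"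
        by (metis add.commute binomial_symmetric le_add2 add_diff_cancel_right')
      then show ?case using elim by (simp add: power_divide field_simps)
    qed
  qed
  then show ?thesis by (rule LIMSEQ_offset)
qed



lemma Afps_power_lim:
  "(\<lambda>n. (Afps a ^ n) $ k * fact k / real n ^ k) \<longlonglongrightarrow> a ^ k"
proof -
  define \<phi> where "\<phi> = Afps a - 1"
  have \<phi>0: "\<phi> $ 0 = 0" by (simp add: \<phi>_def Afps_nth field_simps)
  have \<phi>1: "\<phi> $ 1 = a" by (simp add: \<phi>_def Afps_nth field_simps)
  have eq: "(Afps a ^ n) $ k = (\<Sum>r\<le>k. real (n choose r) * (\<phi> ^ r) $ k)" if "n \<ge> k" for n
  proof -
    have "Afps a ^ n = (\<phi> + 1) ^ n" by (simp add: \<phi>_def)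
    also have "\<dots> = (\<Sum>r\<le>n. of_nat (n choose r) * \<phi> ^ r * 1 ^ (n - r))" by (rule binomial_ring)
    finally have "(Afps a ^ n) $ k = (\<Sum>r\<le>n. real (n choose r) * (\<phi> ^ r) $ k)"
      by (simp add: fps_sum_nth fps_of_nat[symmetric])
    also have "\<dots> = (\<Sum>r\<le>k. real (n choose r) * (\<phi> ^ r) $ k)"
    proof (rule sum.mono_neutral_right)
      show "\<forall>i\<in>{..n} - {..k}. real (n choose i) * (\<phi> ^ i) $ k = 0"
        using startsby_zero_power_prefix[OF \<phi>0] by auto
    qed (use that in auto)
    finally show ?thesis .
  qed
  have lim: "(\<lambda>n. \<Sum>r\<le>k. real (n choose r) / real n ^ k * ((\<phi> ^ r) $ k * fact k))
     \<longlonglongrightarrow> (\<Sum>r\<le>k. (if r = k then 1 / fact k else 0) * ((\<phi> ^ r) $ k * fact k))"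
  proof (intro tendsto_sum tendsto_mult tendsto_const)
    fix r assume "r \<in> {..k}"
    then show "(\<lambda>n. real (n choose r) / real n ^ k) \<longlonglongrightarrow> (if r = k then 1 / fact k else 0)"
      using binom_lim_eq[of k] binom_lim_less[of r k] by auto
  qed
  have "(\<Sum>r\<le>k. (if r = k then 1 / fact k else 0) * ((\<phi> ^ r) $ k * fact k)) = (\<Sum>r\<le>k. if r = k then (\<phi> ^ k) $ k else 0)"
    by (intro sum.cong) auto
  also have "\<dots> = a ^ k" using startsby_zero_power_nth_same[OF \<phi>0] \<phi>1 by simp
  finally have "(\<Sum>r\<le>k. (if r = k then 1 / fact k else 0) * ((\<phi> ^ r) $ k * fact k)) = a ^ k" .
  with lim have lim2: "(\<lambda>n. \<Sum>r\<le>k. real (n choose r) / real n ^ k * ((\<phi> ^ r) $ k * fact k)) \<longlonglongrightarrow> a ^ k"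
    by simp
  show ?thesis
  proof (rule Lim_transform_eventually[OF lim2])
    show "\<forall>\<^sub>F n in sequentially. (\<Sum>r\<le>k. real (n choose r) / real n ^ k * ((\<phi> ^ r) $ k * fact k)) =
        (Afps a ^ n) $ k * fact k / real n ^ k"
      using eventually_ge_at_top[of k]
    proof eventually_elim
      case (elim n)
      show ?case unfolding eq[OF elim] by (simp add: sum_distrib_right sum_divide_distrib mult.assoc)
    qed
  qed
qed

definition mom :: "real \<Rightarrow> nat \<Rightarrow> nat \<Rightarrow> real" where
  "mom a n k = (\<Sum>j\<le>n. Ccoef j n a * (1 - 2 * real j / real n) ^ k)"

lemma mom_eq: assumes "n > 0" shows "mom a n k = (Afps a ^ n) $ k * fact k / real n ^ k"
proof -
  have e: "1 - 2 * real j / real n = (real n - 2 * real j) / real n" for j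
    using assms by (simp add: diff_divide_distrib)
  have "mom a n k = (\<Sum>j\<le>n. Ccoef j n a * (real n - 2 * real j) ^ k / real n ^ k)"
    unfolding mom_def e power_divide by simp
  also have "\<dots> = (\<Sum>j\<le>n. Ccoef j n a * (real n - 2 * real j) ^ k) / fact k * fact k / real n ^ k"
    unfolding sum_divide_distrib[symmetric] by simp
  also have "\<dots> = (Afps a ^ n) $ k * fact k / real n ^ k"
    by (simp only: Afps_power_nth)
  finally show ?thesis .
qed

lemma mom_bound: assumes "a \<ge> 1" shows "\<bar>mom a n k\<bar> \<le> a ^ k"
proof (cases "n = 0")
  case True
  then show ?thesis using assms by (simp add: mom_def Ccoef_def one_le_power)
next
  case False
  then have "\<bar>mom a n k\<bar> = \<bar>(Afps a ^ n) $ k\<bar> * fact k / real n ^ k"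
    by (simp add: mom_eq abs_mult abs_divide)
  also have "\<dots> \<le> (real n * a) ^ k / fact k * fact k / real n ^ k"
    by (intro divide_right_mono mult_right_mono Afps_power_bound assms) auto
  also have "\<dots> = a ^ k" using False by (simp add: power_mult_distrib)
  finally show ?thesis .
qed

lemma mom_lim: "(\<lambda>n. mom a n k) \<longlonglongrightarrow> a ^ k"
proof (rule Lim_transform_eventually[OF Afps_power_lim])
  show "\<forall>\<^sub>F n in sequentially. (Afps a ^ n) $ k * fact k / real n ^ k = mom a n k"
    using eventually_ge_at_top[of 1] by eventually_elim (simp add: mom_eq)
qed



lemma entire_lim:
  fixes F :: "complex \<Rightarrow> complex"
  assumes holF: "F holomorphic_on UNIV" and a: "a \<ge> 1"
  shows "(\<lambda>n. \<Sum>j\<le>n. of_real (Ccoef j n a) * F (of_real (1 - 2 * real j / real n))) \<longlonglongrightarrow> F (of_real a)"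
proof -
  define c where "c k = (deriv ^^ k) F 0 / fact k" for k
  have ser: "(\<lambda>k. c k * w ^ k) sums F w" for w
  proof -
    have "(\<lambda>k. (deriv ^^ k) F 0 / fact k * (w - 0) ^ k) sums F w"
      by (rule holomorphic_power_series[of F 0 "norm w + 1" w])
         (auto intro: holomorphic_on_subset[OF holF])
    then show ?thesis by (simp add: c_def)
  qed
  have absum: "summable (\<lambda>k. norm (c k * of_real a ^ k))"
    by (rule powser_insidea[of c "of_real a + 1"]) (use ser[of "of_real a + 1"] a in \<open>auto simp: sums_iff\<close>)
  define t where "t n j = (1 - 2 * real j / real n)" for n j :: nat
  have eqn: "(\<lambda>k. c k * of_real (mom a n k)) sums (\<Sum>j\<le>n. of_real (Ccoef j n a) * F (of_real (t n j)))" for n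
  proof -
    have "(\<lambda>k. \<Sum>j\<le>n. of_real (Ccoef j n a) * (c k * of_real (t n j) ^ k)) sums (\<Sum>j\<le>n. of_real (Ccoef j n a) * F (of_real (t n j)))"
      by (intro sums_sum sums_mult ser)
    moreover have "(\<Sum>j\<le>n. of_real (Ccoef j n a) * (c k * of_real (t n j) ^ k)) = c k * of_real (mom a n k)" for k
      by (simp add: mom_def t_def sum_distrib_left mult_ac)
    ultimately show ?thesis by simp
  qed
  have tan: "(\<lambda>n. suminf (\<lambda>k. c k * of_real (mom a n k))) \<longlonglongrightarrow> suminf (\<lambda>k. c k * of_real a ^ k)"
  proof (rule tannerys_theorem[where M = "\<lambda>k. norm (c k * of_real a ^ k)", THEN conjunct2, THEN conjunct2])
    fix k
    show "(\<lambda>n. c k * of_real (mom a n k)) \<longlonglongrightarrow> c k * of_real a ^ k"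
      using tendsto_of_real[OF mom_lim[of a k], where 'a=complex] by (intro tendsto_intros) (auto simp flip: of_real_power)
  next
    show "\<forall>\<^sub>F (k, n) in sequentially \<times>\<^sub>F sequentially. norm (c k * of_real (mom a n k)) \<le> norm (c k * of_real a ^ k)"
    proof (intro always_eventually allI, clarify)
      fix k n
      have "norm (c k) * \<bar>mom a n k\<bar> \<le> norm (c k) * a ^ k"
        by (intro mult_left_mono mom_bound a) auto
      then show "norm (c k * of_real (mom a n k)) \<le> norm (c k * of_real a ^ k)"
        using a by (simp add: norm_mult norm_power)
    qed
  qed (use absum in auto)
  then show ?thesis
    using ser[of "of_real a"] eqn by (simp add: sums_iff t_def)
qed



lemma weyl_real_form:
  fixes s :: real
  shows "weyl (- (\<i> / complex_of_real (sqrt 2)) * complex_of_real s) f z =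
     f (z + \<i> * of_real s / of_real (sqrt 2)) * exp (z * (\<i> * of_real s / of_real (sqrt 2)) - of_real s ^ 2 / 4)"
proof -
  have n: "(cmod (- (\<i> / complex_of_real (sqrt 2)) * complex_of_real s))\<^sup>2 / 2 = s ^ 2 / 4"
    by (simp add: norm_mult norm_divide power_mult_distrib power_divide)
  have c: "cnj (- (\<i> / complex_of_real (sqrt 2)) * complex_of_real s) = \<i> * of_real s / of_real (sqrt 2)"
    by simp
  show ?thesis unfolding weyl_def n c
    by (simp add: algebra_simps)
qed

lemma weyl_inv: "weyl c (weyl (- c) g) z = g z"
proof -
  have e: "complex_of_real ((cmod c)\<^sup>2) = c * cnj c"
    by (rule complex_norm_square)
  have z: "(- ((z - c) * cnj c) - complex_of_real ((cmod c)\<^sup>2 / 2)) +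
        (z * cnj c - complex_of_real ((cmod c)\<^sup>2 / 2)) = 0"
    using e by (simp add: algebra_simps flip: of_real_divide) (simp add: field_simps)
  have "weyl c (weyl (- c) g) z = g z * exp ((- ((z - c) * cnj c) - complex_of_real ((cmod c)\<^sup>2 / 2)) +
        (z * cnj c - complex_of_real ((cmod c)\<^sup>2 / 2)))"
    unfolding weyl_def exp_add by (simp only: diff_minus_eq_add diff_add_cancel complex_cnj_minus norm_minus_cancel mult_minus_right mult.assoc)
  also have "\<dots> = g z" unfolding z by simp
  finally show ?thesis .
qed

lemma weyl_inj:
  assumes "\<And>z. weyl c f1 z = weyl c f2 z"
  shows "f1 = f2"
proof
  fix w
  from assms[of "w + c"] show "f1 w = f2 w" by (simp add: weyl_def)
qed

lemma weyl_integrand: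
  "(cmod (weyl d g z))\<^sup>2 * exp (- (cmod z)\<^sup>2) = (cmod (g (z - d)))\<^sup>2 * exp (- (cmod (z - d))\<^sup>2)"
proof -
  have e1: "(exp (Re (z * cnj d) - (cmod d)\<^sup>2 / 2))\<^sup>2 * exp (- (cmod z)\<^sup>2) =
      exp (2 * (Re (z * cnj d) - (cmod d)\<^sup>2 / 2) + (- (cmod z)\<^sup>2))"
    by (simp add: power2_eq_square flip: exp_add)
  have e2: "2 * (Re (z * cnj d) - (cmod d)\<^sup>2 / 2) + (- (cmod z)\<^sup>2) = - (cmod (z - d))\<^sup>2"
    unfolding cmod_power2 by (simp add: power2_eq_square algebra_simps)
  have "(cmod (weyl d g z))\<^sup>2 * exp (- (cmod z)\<^sup>2) =
      (cmod (g (z - d)))\<^sup>2 * ((exp (Re (z * cnj d) - (cmod d)\<^sup>2 / 2))\<^sup>2 * exp (- (cmod z)\<^sup>2))"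
    by (simp add: weyl_def norm_mult power_mult_distrib)
  also have "\<dots> = (cmod (g (z - d)))\<^sup>2 * exp (- (cmod (z - d))\<^sup>2)"
    unfolding e1 e2 ..
  finally show ?thesis .
qed

lemma fock_weyl:
  assumes "fock g" shows "fock (weyl d g)"
proof -
  define h where "h z = (cmod (g z))\<^sup>2 * exp (- (cmod z)\<^sup>2)" for z
  have hol: "g holomorphic_on UNIV" and int: "integrable lborel h"
    using assms by (auto simp: fock_def h_def[abs_def])
  have "(\<lambda>z. z - d) holomorphic_on UNIV" by (intro holomorphic_intros)
  then have "(g \<circ> (\<lambda>z. z - d)) holomorphic_on UNIV"
    by (rule holomorphic_on_compose) (rule holomorphic_on_subset[OF hol], simp)
  then have "(\<lambda>z. g (z - d)) holomorphic_on UNIV" by (simp add: o_def)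
  then have hol2: "weyl d g holomorphic_on UNIV"
    unfolding weyl_def[abs_def] by (intro holomorphic_intros) auto
  have meas: "h \<in> borel_measurable borel"
    using borel_measurable_integrable[OF int] by (simp add: measurable_lborel1)
  have "integrable (distr lborel borel ((+) (- d))) h"
    using int by (simp add: lborel_distr_plus)
  then have "integrable lborel (\<lambda>z. h (- d + z))"
    by (subst (asm) integrable_distr_eq) (use meas in auto)
  then have "integrable lborel (\<lambda>z. (cmod (weyl d g z))\<^sup>2 * exp (- (cmod z)\<^sup>2))"
    by (simp add: weyl_integrand h_def)
  with hol2 show ?thesis by (simp add: fock_def)
qed


lemma weyl_lim:
  fixes f :: "complex \<Rightarrow> complex"
  assumes hol: "f holomorphic_on UNIV" and a: "a \<ge> 1"
  shows "(\<lambda>n. \<Sum>j\<le>n. complex_of_real (Ccoef j n a) * weyl (bcoef n j) f z)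
           \<longlonglongrightarrow> weyl (- (\<i> / complex_of_real (sqrt 2)) * complex_of_real a) f z"
proof -
  define F where "F t = f (z + \<i> * t / of_real (sqrt 2)) * exp (z * (\<i> * t / of_real (sqrt 2)) - t ^ 2 / 4)" for t
  have "(\<lambda>t. z + \<i> * t / of_real (sqrt 2)) holomorphic_on UNIV" by (intro holomorphic_intros) auto
  then have "(f \<circ> (\<lambda>t. z + \<i> * t / of_real (sqrt 2))) holomorphic_on UNIV"
    by (rule holomorphic_on_compose) (rule holomorphic_on_subset[OF hol], simp)
  then have "(\<lambda>t. f (z + \<i> * t / of_real (sqrt 2))) holomorphic_on UNIV" by (simp add: o_def)
  then have holF: "F holomorphic_on UNIV"
    unfolding F_def[abs_def] by (intro holomorphic_intros) auto
  have b: "bcoef n j = - (\<i> / complex_of_real (sqrt 2)) * complex_of_real (1 - 2 * real j / real n)" for n j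
    by (simp add: bcoef_def)
  have w: "weyl (- (\<i> / complex_of_real (sqrt 2)) * complex_of_real s) f z = F (of_real s)" for s
    unfolding weyl_real_form F_def ..
  show ?thesis
    unfolding b w using entire_lim[OF holF a] .
qed

theorem theorem3p32:
  fixes a :: real
  assumes "a > 1"
  shows "\<forall>g. fock g \<longrightarrow>
    (\<exists>!f. fock f \<and>
       (\<forall>z. (\<lambda>n. \<Sum>j\<le>n. complex_of_real (Ccoef j n a) * weyl (bcoef n j) f z)
               \<longlonglongrightarrow> g z))"
proof (intro allI impI)
  fix g assume g: "fock g"
  define c where "c = - (\<i> / complex_of_real (sqrt 2)) * complex_of_real a"
  have a1: "a \<ge> 1" using assms by simp
  have lim: "(\<lambda>n. \<Sum>j\<le>n. complex_of_real (Ccoef j n a) * weyl (bcoef n j) f z) \<longlonglongrightarrow> weyl c f z"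
    if "fock f" for f z
    using weyl_lim[OF _ a1, of f z] that by (simp add: fock_def c_def)
  show "\<exists>!f. fock f \<and>
       (\<forall>z. (\<lambda>n. \<Sum>j\<le>n. complex_of_real (Ccoef j n a) * weyl (bcoef n j) f z) \<longlonglongrightarrow> g z)"
  proof (rule ex1I[of _ "weyl (- c) g"])
    show "fock (weyl (- c) g) \<and>
       (\<forall>z. (\<lambda>n. \<Sum>j\<le>n. complex_of_real (Ccoef j n a) * weyl (bcoef n j) (weyl (- c) g) z) \<longlonglongrightarrow> g z)"
    proof -
      have "\<forall>z. (\<lambda>n. \<Sum>j\<le>n. complex_of_real (Ccoef j n a) * weyl (bcoef n j) (weyl (- c) g) z) \<longlonglongrightarrow> weyl c (weyl (- c) g) z"
        using lim[OF fock_weyl[OF g]] by blast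
      then show ?thesis using fock_weyl[OF g] unfolding weyl_inv by blast
    qed
  next
    fix f assume f: "fock f \<and>
       (\<forall>z. (\<lambda>n. \<Sum>j\<le>n. complex_of_real (Ccoef j n a) * weyl (bcoef n j) f z) \<longlonglongrightarrow> g z)"
    have "weyl c f z = weyl c (weyl (- c) g) z" for z
      using LIMSEQ_unique[OF lim[of f z] f[THEN conjunct2, rule_format, of z]] f by (simp add: weyl_inv)
    then show "f = weyl (- c) g" by (rule weyl_inj)
  qed
qed

end
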